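(* Let $\mathcal C$ be a binary linear code presented by an $m\times n$ parity-check matrix $H$, let $\mathbf c\in\mathcal C$ be a codeword, let $\boldsymbol\omega$ be a linear programming pseudocodeword, and define $\phi_{\mathbf c}:\mathbb R^n\to\mathbb R^n$ by $x_i\mapsto(-1)^{c_i}x_i$ for $i=1,\dots,n$. Let $\mathbf t\in\mathcal K_{\boldsymbol\omega}$. Then $\phi_{\mathbf c}(\mathbf t)\in\mathcal K_{\boldsymbol\omega^{\mathbf c}}$. Moreover, for every $\sigma>0$, if $\boldsymbol\eta$ is a random vector with i.i.d. $N(0,\sigma^2)$ coordinates, then the probability that $\boldsymbol\omega$ is the unique optimal solution of minimizing $(\mathbf t+\boldsymbol\eta)^T\mathbf x$ over $\mathbf x\in\mathcal P(H)$ equals the probability that $\boldsymbol\omega^{\mathbf c}$ is the unique optimal solution of minimizing $(\phi_{\mathbf c}(\mathbf t)+\boldsymbol\eta)^T\mathbf x$ over $\mathbf x\in\mathcal P(H)$.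
   Context: For a row $\mathbf h_j$ of $H=(h_{j,i})$ let $N(\mathbf h_j)=\{i : h_{j,i}=1\}$. The fundamental polytope $\mathcal P(H)$ is written as $\{\mathbf x: A\mathbf x\ge\mathbf b\}$ with the following constraints (rows of $A$ with right-hand sides): $x_i\ge 0$ and $-x_i\ge -1$ for each $i=1,\dots,n$; and for every row index $j$ and every odd-sized $S\subseteq N(\mathbf h_j)$, $-\sum_{i\in S}x_i+\sum_{i'\in N(\mathbf h_j)\setminus S}x_{i'}\ge 1-|S|$. A linear programming (LP) pseudocodeword is an extreme point of $\mathcal P(H)$. For $\mathbf c\in\mathcal C$ and $\mathbf x\in\mathcal P(H)$, the relative point $\mathbf x^{\mathbf c}$ has $i$th coordinate $|x_i-c_i|$; if $\boldsymbol\omega$ is an LP pseudocodeword, so is $\boldsymbol\omega^{\mathbf c}$. The recovery cone $\mathcal K_{\boldsymbol\omega}$ is the set of conic (nonnegative) combinations of the rows of $A$ whose constraints are active (hold with equality) at $\boldsymbol\omega$. The LP decoder, given a received vector $\mathbf y$ (treated as the vector of log-likelihood ratios on the AWGN channel), minimizes $\mathbf y^T\mathbf x$ over $\mathbf x\in\mathcal P(H)$; transmitting $\mathbf t$ over the AWGN channel produces the received vector $\mathbf t+\boldsymbol\eta$. *)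

theory Defs
  imports "HOL-Analysis.Analysis" "HOL-Probability.Probability"
begin

text \<open>A binary m x n parity-check matrix is H :: 'm => 'n => bool, where H j i holds iff h_{j,i} = 1.
  Vectors in R^n are real^'n.\<close>

definition nbhd :: "('m \<Rightarrow> 'n \<Rightarrow> bool) \<Rightarrow> 'm \<Rightarrow> 'n set" where
  "nbhd H j = {i. H j i}"

text \<open>Codewords: c :: 'n => bool (c i iff c_i = 1), with H c = 0 over GF(2).\<close>
definition codeword :: "('m::finite \<Rightarrow> 'n::finite \<Rightarrow> bool) \<Rightarrow> ('n \<Rightarrow> bool) \<Rightarrow> bool" where
  "codeword H c \<longleftrightarrow> (\<forall>j. even (card {i. H j i \<and> c i}))"

definition constraints :: "('m::finite \<Rightarrow> 'n::finite \<Rightarrow> bool) \<Rightarrow> ((real^'n) \<times> real) set" where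
  "constraints H =
     {(axis i 1, 0) | i. True}
   \<union> {(- axis i 1, -1) | i. True}
   \<union> {((\<chi> k. if k \<in> S then -1 else if k \<in> nbhd H j then 1 else 0), 1 - real (card S)) | j S.
        S \<subseteq> nbhd H j \<and> odd (card S)}"

definition fund_polytope :: "('m::finite \<Rightarrow> 'n::finite \<Rightarrow> bool) \<Rightarrow> (real^'n) set" where
  "fund_polytope H = {x. \<forall>(a, b) \<in> constraints H. a \<bullet> x \<ge> b}"

definition LP_pseudocodeword :: "('m::finite \<Rightarrow> 'n::finite \<Rightarrow> bool) \<Rightarrow> real^'n \<Rightarrow> bool" where
  "LP_pseudocodeword H w \<longleftrightarrow> w extreme_point_of (fund_polytope H)"

definition relative_point :: "('n::finite \<Rightarrow> bool) \<Rightarrow> real^'n \<Rightarrow> real^'n" where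
  "relative_point c x = (\<chi> i. \<bar>x $ i - (if c i then 1 else 0)\<bar>)"

definition active_rows :: "('m::finite \<Rightarrow> 'n::finite \<Rightarrow> bool) \<Rightarrow> real^'n \<Rightarrow> (real^'n) set" where
  "active_rows H w = {a. \<exists>b. (a, b) \<in> constraints H \<and> a \<bullet> w = b}"

definition recovery_cone :: "('m::finite \<Rightarrow> 'n::finite \<Rightarrow> bool) \<Rightarrow> real^'n \<Rightarrow> (real^'n) set" where
  "recovery_cone H w = {t. \<exists>f. (\<forall>a \<in> active_rows H w. f a \<ge> 0) \<and>
                              t = (\<Sum>a \<in> active_rows H w. f a *\<^sub>R a)}"

definition phi :: "('n::finite \<Rightarrow> bool) \<Rightarrow> real^'n \<Rightarrow> real^'n" where
  "phi c x = (\<chi> i. (if c i then -1 else 1) * x $ i)"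

definition unique_opt :: "('m::finite \<Rightarrow> 'n::finite \<Rightarrow> bool) \<Rightarrow> real^'n \<Rightarrow> real^'n \<Rightarrow> bool" where
  "unique_opt H y w \<longleftrightarrow> w \<in> fund_polytope H \<and>
     (\<forall>x \<in> fund_polytope H. x \<noteq> w \<longrightarrow> y \<bullet> w < y \<bullet> x)"

end

theory Submission
  imports Defs
begin


definition cv :: "('n::finite \<Rightarrow> bool) \<Rightarrow> real^'n" where
  "cv c = (\<chi> i. if c i then 1 else 0)"
definition Raff :: "('n::finite \<Rightarrow> bool) \<Rightarrow> real^'n \<Rightarrow> real^'n" where
  "Raff c x = (\<chi> i. if c i then 1 - x $ i else x $ i)"

lemma phi_phi[simp]: "phi c (phi c x) = x"
  by (simp add: phi_def vec_eq_iff)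
lemma Raff_Raff[simp]: "Raff c (Raff c x) = x"
  by (simp add: Raff_def vec_eq_iff)
lemma phi_inj: "inj (phi c)"
  by (metis injI phi_phi)
lemma Raff_inj: "inj (Raff c)"
  by (metis injI Raff_Raff)
lemma inner_phi_Raff: "phi c a \<bullet> Raff c x = a \<bullet> x - a \<bullet> cv c"
  unfolding inner_vec_def phi_def Raff_def cv_def
  by (auto simp: sum_subtractf[symmetric] algebra_simps intro!: sum.cong)
lemma inner_phi_cv: "phi c a \<bullet> cv c = - (a \<bullet> cv c)"
  unfolding inner_vec_def phi_def cv_def
  by (auto simp: sum_negf[symmetric] intro!: sum.cong)
lemma phi_add: "phi c (x + y) = phi c x + phi c y"
  by (simp add: phi_def vec_eq_iff algebra_simps)
lemma phi_sum: "phi c (\<Sum>a\<in>A. f a *\<^sub>R a) = (\<Sum>a\<in>A. f a *\<^sub>R phi c a)"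
  by (simp add: phi_def vec_eq_iff sum_distrib_left algebra_simps)
lemma phi_axis: "phi c (axis i 1) = (if c i then - axis i 1 else axis i 1)"
  by (auto simp: phi_def vec_eq_iff axis_def)

lemma constr_map:
  assumes cw: "codeword H c" and ab: "(a, b) \<in> constraints H"
  shows "(phi c a, b - a \<bullet> cv c) \<in> constraints H"
proof -
  consider (p) i where "a = axis i 1" "b = 0" | (n) i where "a = - axis i 1" "b = -1"
    | (q) j S where "a = (\<chi> k. if k \<in> S then -1 else if k \<in> nbhd H j then 1 else 0)"
       "b = 1 - real (card S)" "S \<subseteq> nbhd H j" "odd (card S)"
    using ab unfolding constraints_def by blast
  then show ?thesis
  proof cases
    case p
    then show ?thesis
      by (cases "c i") (auto simp: constraints_def phi_axis cv_def inner_axis')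
  next
    case n
    have "phi c (- axis i 1) = - phi c (axis i 1)" by (simp add: phi_def vec_eq_iff)
    with n show ?thesis
      by (cases "c i") (auto simp: constraints_def phi_axis cv_def inner_axis')
  next
    case q
    let ?N = "nbhd H j" and ?C = "{k. c k}"
    define S' where "S' = (S - ?C) \<union> (?N \<inter> ?C - S)"
    have S'N: "S' \<subseteq> ?N" using q by (auto simp: S'_def)
    have phia: "phi c a = (\<chi> k. if k \<in> S' then -1 else if k \<in> ?N then 1 else 0)"
      using q by (auto simp: phi_def vec_eq_iff S'_def)
    have ev: "even (card (?N \<inter> ?C))"
      using cw unfolding codeword_def nbhd_def by (metis Collect_conj_eq)
    have c1: "card S = card (S \<inter> ?C) + card (S - ?C)"
      by (metis card_Int_Diff finite)
    have c2: "card (?N \<inter> ?C) = card (S \<inter> ?C) + card (?N \<inter> ?C - S)"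
    proof -
      have "S \<inter> ?C = (?N \<inter> ?C) \<inter> S" using q by auto
      then show ?thesis by (metis card_Int_Diff finite)
    qed
    have c3: "card S' = card (S - ?C) + card (?N \<inter> ?C - S)"
      unfolding S'_def by (rule card_Un_disjoint) auto
    have oddS': "odd (card S')"
      using c1 c2 c3 ev q(4) by presburger
    have acv: "a \<bullet> cv c = real (card (?N \<inter> ?C - S)) - real (card (S \<inter> ?C))"
    proof -
      have "a \<bullet> cv c = (\<Sum>k\<in>UNIV. of_bool (k \<in> ?N \<inter> ?C - S) - of_bool (k \<in> S \<inter> ?C) :: real)"
        unfolding inner_vec_def q(1) cv_def using q(3)
        by (intro sum.cong) auto
      also have "\<dots> = real (card (?N \<inter> ?C - S)) - real (card (S \<inter> ?C))"
      proof -
        have e1: "{k \<in> ?N. c k \<and> k \<notin> S} = ?N \<inter> ?C - S" by auto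
        have e2: "{k \<in> S. c k} = S \<inter> ?C" by auto
        show ?thesis by (simp add: sum_subtractf sum_of_bool_eq e1 e2)
      qed
      finally show ?thesis .
    qed
    have "b - a \<bullet> cv c = 1 - real (card S')"
      using q(2) acv c1 c3 by simp
    then show ?thesis
      unfolding constraints_def using phia S'N oddS' by blast
  qed
qed


lemma Raff_poly:
  assumes cw: "codeword H c" and x: "x \<in> fund_polytope H"
  shows "Raff c x \<in> fund_polytope H"
  unfolding fund_polytope_def
proof (clarify)
  fix a' b' assume ab: "(a', b') \<in> constraints H"
  have "(phi c a', b' - a' \<bullet> cv c) \<in> constraints H" by (rule constr_map[OF cw ab])
  then have "phi c a' \<bullet> x \<ge> b' - a' \<bullet> cv c" using x unfolding fund_polytope_def by blast
  moreover have "a' \<bullet> Raff c x = phi c a' \<bullet> x - phi c a' \<bullet> cv c"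
    using inner_phi_Raff[of c "phi c a'" x] by simp
  ultimately show "b' \<le> a' \<bullet> Raff c x" by (simp add: inner_phi_cv)
qed

lemma poly_box:
  assumes x: "x \<in> fund_polytope H"
  shows "0 \<le> x $ i \<and> x $ i \<le> 1"
proof -
  have "(axis i 1, 0) \<in> constraints H" "(- axis i 1, -1) \<in> constraints H"
    unfolding constraints_def by blast+
  moreover have all: "\<And>a b. (a,b) \<in> constraints H \<Longrightarrow> a \<bullet> x \<ge> b"
    using x unfolding fund_polytope_def by auto
  ultimately have "axis i 1 \<bullet> x \<ge> 0" "(- axis i 1) \<bullet> x \<ge> -1"
    by blast+
  then show ?thesis by (simp add: inner_axis')
qed

lemma rel_eq_Raff:
  assumes x: "x \<in> fund_polytope H"
  shows "relative_point c x = Raff c x"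
  using poly_box[OF x] by (auto simp: relative_point_def Raff_def vec_eq_iff)

lemma active_sub:
  assumes cw: "codeword H c"
  shows "phi c ` active_rows H w \<subseteq> active_rows H (Raff c w)"
proof clarify
  fix a assume "a \<in> active_rows H w"
  then obtain b where ab: "(a, b) \<in> constraints H" "a \<bullet> w = b" unfolding active_rows_def by blast
  show "phi c a \<in> active_rows H (Raff c w)"
    unfolding active_rows_def
    using constr_map[OF cw ab(1)] ab(2) inner_phi_Raff[of c a w] by auto
qed

lemma active_eq:
  assumes cw: "codeword H c"
  shows "active_rows H (Raff c w) = phi c ` active_rows H w"
proof
  show "phi c ` active_rows H w \<subseteq> active_rows H (Raff c w)" by (rule active_sub[OF cw])
  have "phi c ` active_rows H (Raff c w) \<subseteq> active_rows H (Raff c (Raff c w))"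
    using active_sub[OF cw, of "Raff c w"] .
  then have sub: "phi c ` active_rows H (Raff c w) \<subseteq> active_rows H w" by simp
  show "active_rows H (Raff c w) \<subseteq> phi c ` active_rows H w"
  proof
    fix a assume "a \<in> active_rows H (Raff c w)"
    then have "phi c a \<in> active_rows H w" using sub by blast
    then show "a \<in> phi c ` active_rows H w" by (metis image_eqI phi_phi)
  qed
qed

lemma part1:
  assumes cw: "codeword H c" and w: "w \<in> fund_polytope H" and t: "t \<in> recovery_cone H w"
  shows "phi c t \<in> recovery_cone H (relative_point c w)"
proof -
  obtain f where f: "\<forall>a \<in> active_rows H w. f a \<ge> 0" "t = (\<Sum>a \<in> active_rows H w. f a *\<^sub>R a)"
    using t unfolding recovery_cone_def by blast
  have AR: "active_rows H (relative_point c w) = phi c ` active_rows H w"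
    using rel_eq_Raff[OF w] active_eq[OF cw] by simp
  have "phi c t = (\<Sum>a \<in> active_rows H w. f a *\<^sub>R phi c a)" unfolding f(2) by (rule phi_sum)
  also have "\<dots> = (\<Sum>a \<in> phi c ` active_rows H w. f (phi c a) *\<^sub>R a)"
  proof -
    have inj: "inj_on (phi c) (active_rows H w)" using phi_inj by (rule inj_on_subset) simp
    show ?thesis by (simp add: sum.reindex[OF inj] comp_def)
  qed
  finally have "phi c t = (\<Sum>a \<in> active_rows H (relative_point c w). f (phi c a) *\<^sub>R a)"
    unfolding AR .
  moreover have "\<forall>a \<in> active_rows H (relative_point c w). f (phi c a) \<ge> 0"
    unfolding AR using f(1) by auto
  ultimately show ?thesis unfolding recovery_cone_def
    by (intro CollectI exI[of _ "\<lambda>a. f (phi c a)"] conjI)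
qed



lemma uo_equiv:
  assumes cw: "codeword H c" and w: "w \<in> fund_polytope H"
  shows "unique_opt H u w \<longleftrightarrow> unique_opt H (phi c u) (relative_point c w)"
proof -
  have rw: "relative_point c w = Raff c w" by (rule rel_eq_Raff[OF w])
  have Rw: "Raff c w \<in> fund_polytope H" by (rule Raff_poly[OF cw w])
  have key: "phi c u \<bullet> Raff c z = u \<bullet> z - u \<bullet> cv c" for z by (rule inner_phi_Raff)
  show ?thesis
  proof
    assume L: "unique_opt H u w"
    show "unique_opt H (phi c u) (relative_point c w)"
      unfolding unique_opt_def rw
    proof (intro conjI ballI impI)
      show "Raff c w \<in> fund_polytope H" by (rule Rw)
      fix x assume x: "x \<in> fund_polytope H" "x \<noteq> Raff c w"
      have "Raff c x \<in> fund_polytope H" by (rule Raff_poly[OF cw x(1)])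
      moreover have "Raff c x \<noteq> w" using x(2) by auto
      ultimately have "u \<bullet> w < u \<bullet> Raff c x" using L unfolding unique_opt_def by blast
      then show "phi c u \<bullet> Raff c w < phi c u \<bullet> x"
        using key[of w] key[of "Raff c x"] by simp
    qed
  next
    assume R: "unique_opt H (phi c u) (relative_point c w)"
    show "unique_opt H u w"
      unfolding unique_opt_def
    proof (intro conjI ballI impI)
      show "w \<in> fund_polytope H" by (rule w)
      fix x assume x: "x \<in> fund_polytope H" "x \<noteq> w"
      have "Raff c x \<in> fund_polytope H" by (rule Raff_poly[OF cw x(1)])
      moreover have "Raff c x \<noteq> Raff c w" using x(2) by (metis Raff_Raff)
      ultimately have "phi c u \<bullet> Raff c w < phi c u \<bullet> Raff c x"
        using R unfolding unique_opt_def rw by blast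
      then show "u \<bullet> w < u \<bullet> x"
        using key[of w] key[of x] by simp
    qed
  qed
qed

lemma finite_constraints:
  fixes H :: "'m::finite \<Rightarrow> 'n::finite \<Rightarrow> bool"
  shows "finite (constraints H)"
proof -
  let ?g = "\<lambda>j S. ((\<chi> k. if k \<in> S then -1 else if k \<in> nbhd H j then 1 else 0) :: real^'n, 1 - real (card S))"
  have f1: "finite {(axis i 1 :: real^'n, 0::real) | i. True}"
    using finite_image_set[of "\<lambda>_. True" "\<lambda>i. (axis i 1 :: real^'n, 0::real)"] by simp
  have f2: "finite {(- axis i 1 :: real^'n, -1::real) | i. True}"
    using finite_image_set[of "\<lambda>_. True" "\<lambda>i. (- axis i 1 :: real^'n, -1::real)"] by simp
  have f3: "finite {?g j S | j S. True}"
    using finite_image_set2[of "\<lambda>_. True" "\<lambda>_. True" ?g] by simp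
  have "{?g j S | j S. S \<subseteq> nbhd H j \<and> odd (card S)} \<subseteq> {?g j S | j S. True}" by blast
  then have f3': "finite {?g j S | j S. S \<subseteq> nbhd H j \<and> odd (card S)}" using f3 finite_subset by blast
  show ?thesis unfolding constraints_def using f1 f2 f3' by (intro finite_UnI) 
qed

lemma poly_polytope:
  fixes H :: "'m::finite \<Rightarrow> 'n::finite \<Rightarrow> bool"
  shows "polytope (fund_polytope H)"
proof -
  have eq: "fund_polytope H = \<Inter> ((\<lambda>ab. {x. fst ab \<bullet> x \<ge> snd ab}) ` constraints H)"
    unfolding fund_polytope_def by (auto simp: split_beta)
  have "polyhedron (fund_polytope H)"
    unfolding eq
  proof (rule polyhedron_Inter)
    show "finite ((\<lambda>ab. {x. fst ab \<bullet> x \<ge> snd ab}) ` constraints H)"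
      using finite_constraints[of H] by (rule finite_imageI)
    fix S assume "S \<in> (\<lambda>ab. {x. fst ab \<bullet> x \<ge> snd ab}) ` constraints H"
    then obtain ab where "S = {x. fst ab \<bullet> x \<ge> snd ab}" by blast
    then show "polyhedron S" by (simp add: polyhedron_halfspace_ge)
  qed
  moreover have "bounded (fund_polytope H)"
  proof (rule bounded_subset[OF bounded_cbox])
    show "fund_polytope H \<subseteq> cbox 0 (\<chi> i. 1)"
      using poly_box[of _ H] by (auto simp: mem_box_cart)
  qed
  ultimately show ?thesis by (simp add: polytope_eq_bounded_polyhedron)
qed

lemma hull_min:
  fixes q :: "real^'n"
  assumes V: "finite V" and x: "x \<in> convex hull V" and xv: "x \<noteq> v"
    and pos: "\<forall>z\<in>V - {v}. q \<bullet> v < q \<bullet> z"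
  shows "q \<bullet> v < q \<bullet> x"
proof -
  obtain u where u: "\<forall>z\<in>V. 0 \<le> u z" "sum u V = 1" "(\<Sum>z\<in>V. u z *\<^sub>R z) = x"
    using x unfolding convex_hull_finite[OF V] by blast
  have "q \<bullet> x - q \<bullet> v = (\<Sum>z\<in>V. u z * (q \<bullet> z)) - (\<Sum>z\<in>V. u z) * (q \<bullet> v)"
    using u(2,3)[symmetric] by (simp add: inner_sum_right)
  also have "\<dots> = (\<Sum>z\<in>V. u z * (q \<bullet> z - q \<bullet> v))"
    by (simp add: sum_distrib_right sum_subtractf[symmetric] algebra_simps)
  finally have diff: "q \<bullet> x - q \<bullet> v = (\<Sum>z\<in>V. u z * (q \<bullet> z - q \<bullet> v))" .
  have nn: "\<forall>z\<in>V. 0 \<le> u z * (q \<bullet> z - q \<bullet> v)"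
    using u(1) pos by (metis Diff_iff less_eq_real_def mult_nonneg_nonneg diff_ge_0_iff_ge singletonD order_refl diff_self)
  show ?thesis
  proof (rule ccontr)
    assume "\<not> ?thesis"
    then have "(\<Sum>z\<in>V. u z * (q \<bullet> z - q \<bullet> v)) \<le> 0" using diff by simp
    moreover have "(\<Sum>z\<in>V. u z * (q \<bullet> z - q \<bullet> v)) \<ge> 0" using nn by (simp add: sum_nonneg)
    ultimately have S0: "(\<Sum>z\<in>V. u z * (q \<bullet> z - q \<bullet> v)) = 0" by linarith
    have z0: "\<forall>z\<in>V. u z * (q \<bullet> z - q \<bullet> v) = 0"
      using sum_nonneg_eq_0_iff[OF V, of "\<lambda>z. u z * (q \<bullet> z - q \<bullet> v)"] nn S0 by auto
    have uz: "\<forall>z\<in>V - {v}. u z = 0"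
    proof
      fix z assume "z \<in> V - {v}"
      then have "q \<bullet> z - q \<bullet> v > 0" "u z * (q \<bullet> z - q \<bullet> v) = 0" using pos z0 by auto
      then show "u z = 0" by simp
    qed
    show False
    proof (cases "v \<in> V")
      case True
      have "sum u V = u v + sum u (V - {v})" by (rule sum.remove[OF V True])
      then have "u v = 1" using uz u(2) by simp
      have "(\<Sum>z\<in>V. u z *\<^sub>R z) = u v *\<^sub>R v + (\<Sum>z\<in>V - {v}. u z *\<^sub>R z)"
        by (rule sum.remove[OF V True])
      then have "x = v" using uz u(3) \<open>u v = 1\<close> by simp
      then show False using xv by simp
    next
      case False
      then have "sum u V = 0" using uz by simp
      then show False using u(2) by simp
    qed
  qed
qed

lemma open_uo: "open {y. unique_opt H (a + y) v}"
proof -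
  obtain V where V: "finite V" "fund_polytope H = convex hull V"
    using poly_polytope[of H, unfolded polytope_def] by (elim exE conjE)
  show ?thesis
  proof (cases "v \<in> fund_polytope H")
    case False
    then have "{y. unique_opt H (a + y) v} = {}" unfolding unique_opt_def by auto
    then show ?thesis by simp
  next
    case True
    have "{y. unique_opt H (a + y) v} = (\<Inter>z\<in>V - {v}. {y. (a + y) \<bullet> v < (a + y) \<bullet> z})"
    proof (intro set_eqI iffI)
      fix y assume "y \<in> {y. unique_opt H (a + y) v}"
      then have U: "\<forall>x \<in> fund_polytope H. x \<noteq> v \<longrightarrow> (a + y) \<bullet> v < (a + y) \<bullet> x"
        unfolding unique_opt_def by blast
      have "V \<subseteq> fund_polytope H" unfolding V(2) by (rule hull_subset)
      with U show "y \<in> (\<Inter>z\<in>V - {v}. {y. (a + y) \<bullet> v < (a + y) \<bullet> z})"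
        by blast
    next
      fix y assume "y \<in> (\<Inter>z\<in>V - {v}. {y. (a + y) \<bullet> v < (a + y) \<bullet> z})"
      then have "\<forall>z\<in>V - {v}. (a + y) \<bullet> v < (a + y) \<bullet> z" by blast
      then show "y \<in> {y. unique_opt H (a + y) v}"
        unfolding unique_opt_def using True hull_min[OF V(1), of _ v "a + y"] V(2) by blast
    qed
    moreover have "open (\<Inter>z\<in>V - {v}. {y. (a + y) \<bullet> v < (a + y) \<bullet> z})"
      using V(1) by (intro open_INT ballI open_Collect_less) (auto intro!: continuous_intros)
    ultimately show ?thesis by simp
  qed
qed



lemma normal_flip:
  assumes D: "distributed M lborel X (\<lambda>x. ennreal (normal_density 0 \<sigma> x))" and A: "A \<in> sets borel"
  shows "emeasure M ((\<lambda>s. - X s) -` A \<inter> space M) = emeasure M (X -` A \<inter> space M)"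
proof -
  have A': "uminus -` A \<in> sets (borel :: real measure)"
    using measurable_sets_borel[OF borel_measurable_uminus[OF measurable_ident] A] by (simp add: id_def)
  have "(\<lambda>s. - X s) -` A \<inter> space M = X -` (uminus -` A) \<inter> space M" by auto
  then have "emeasure M ((\<lambda>s. - X s) -` A \<inter> space M)
      = (\<integral>\<^sup>+x. ennreal (normal_density 0 \<sigma> x) * indicator (uminus -` A) x \<partial>lborel)"
    using distributed_emeasure[OF D, of "uminus -` A"] A' by simp
  also have "\<dots> = (\<integral>\<^sup>+x. ennreal (normal_density 0 \<sigma> x) * indicator A x \<partial>lborel)"
  proof -
    have m: "(\<lambda>x. ennreal (normal_density 0 \<sigma> x) * indicator A x) \<in> borel_measurable borel"
      using A by (simp add: normal_density_def)
    have "(\<integral>\<^sup>+x. ennreal (normal_density 0 \<sigma> x) * indicator A x \<partial>lborel)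
        = ennreal \<bar>-1\<bar> * (\<integral>\<^sup>+x. ennreal (normal_density 0 \<sigma> (0 + -1 * x)) * indicator A (0 + -1 * x) \<partial>lborel)"
      by (rule nn_integral_real_affine[OF m]) simp
    also have "\<dots> = (\<integral>\<^sup>+x. ennreal (normal_density 0 \<sigma> x) * indicator (uminus -` A) x \<partial>lborel)"
      by (simp add: normal_density_def indicator_def)
    finally show ?thesis by simp
  qed
  also have "\<dots> = emeasure M (X -` A \<inter> space M)"
    using distributed_emeasure[OF D, of A] A by simp
  finally show ?thesis .
qed


lemma vec_meas:
  fixes f :: "'a \<Rightarrow> real^'n::finite"
  assumes "\<And>i. (\<lambda>s. f s $ i) \<in> borel_measurable M"
  shows "f \<in> borel_measurable M"
proof (rule iffD2[OF borel_measurable_euclidean_space], rule ballI)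
  fix b :: "real^'n" assume "b \<in> Basis"
  then obtain i u where "u \<in> (Basis :: real set)" "b = axis i u" unfolding Basis_vec_def by blast
  then have b: "b = axis i 1" by simp
  show "(\<lambda>x. f x \<bullet> b) \<in> borel_measurable M" using assms[of i] by (simp add: b inner_axis)
qed

definition gen :: "(real^'n::finite) set set" where
  "gen = {{y. \<forall>i. y $ i \<in> A i} | A. \<forall>i. A i \<in> sets borel}"

lemma gen_sets: "X \<in> gen \<Longrightarrow> X \<in> sets borel"
proof -
  assume "X \<in> gen"
  then obtain A where X: "X = {y. \<forall>i. y $ i \<in> A i}" and A: "\<forall>i. A i \<in> sets borel"
    unfolding gen_def by blast
  have "X = (\<Inter>i. (\<lambda>y. y $ i) -` A i)" unfolding X by auto
  also have "\<dots> \<in> sets borel"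
    using A by (intro sets.countable_INT) (auto intro: measurable_sets_borel[OF borel_measurable_nth])
  finally show ?thesis .
qed

lemma gen_sigma: "sets (borel :: (real^'n::finite) measure) = sigma_sets UNIV gen"
proof
  show "sigma_sets UNIV gen \<subseteq> sets (borel :: (real^'n) measure)"
    using sets.sigma_sets_subset[of "gen" borel] gen_sets by auto
  have "sets (borel :: (real^'n) measure) = sigma_sets UNIV ((\<lambda>(a, i). {x::real^'n. x \<bullet> i < a}) ` (UNIV \<times> Basis))"
    by (subst borel_eq_halfspace_less) simp
  also have "\<dots> \<subseteq> sigma_sets UNIV gen"
  proof (rule sigma_sets_mono)
    show "(\<lambda>(a, i). {x::real^'n. x \<bullet> i < a}) ` (UNIV \<times> Basis) \<subseteq> sigma_sets UNIV gen"
    proof clarify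
      fix a :: real and b :: "real^'n" assume "b \<in> Basis"
      then obtain k u where "u \<in> (Basis :: real set)" "b = axis k u" unfolding Basis_vec_def by blast
      then have b: "b = axis k 1" by simp
      have "{x::real^'n. x \<bullet> b < a} = {y. \<forall>i. y $ i \<in> (if i = k then {..<a} else UNIV)}"
        by (auto simp: b inner_axis)
      also have "\<dots> \<in> gen" unfolding gen_def by (intro CollectI exI[of _ "\<lambda>i. if i = k then {..<a} else UNIV"]) auto
      finally show "{x::real^'n. x \<bullet> b < a} \<in> sigma_sets UNIV gen" by auto
    qed
  qed
  finally show "sets (borel :: (real^'n) measure) \<subseteq> sigma_sets UNIV gen" .
qed

lemma gen_Int_stable: "Int_stable (gen :: (real^'n::finite) set set)"
proof (rule Int_stableI)
  fix X Y :: "(real^'n) set" assume "X \<in> gen" "Y \<in> gen"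
  then obtain A B where X: "X = {y. \<forall>i. y $ i \<in> A i}" "\<forall>i. A i \<in> sets borel"
    and Y: "Y = {y. \<forall>i. y $ i \<in> B i}" "\<forall>i. B i \<in> sets borel"
    unfolding gen_def by blast
  have "X \<inter> Y = {y. \<forall>i. y $ i \<in> A i \<inter> B i}" using X Y by auto
  then show "X \<inter> Y \<in> gen" unfolding gen_def using X(2) Y(2)
    by (intro CollectI exI[of _ "\<lambda>i. A i \<inter> B i"]) auto
qed


lemma distr_flip:
  fixes \<eta> :: "'a \<Rightarrow> real^'n::finite" and c :: "'n \<Rightarrow> bool"
  assumes P: "prob_space M" and ind: "prob_space.indep_vars M (\<lambda>_. borel) (\<lambda>i s. \<eta> s $ i) UNIV"
    and D: "\<forall>i. distributed M lborel (\<lambda>s. \<eta> s $ i) (\<lambda>x. ennreal (normal_density 0 \<sigma> x))"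
  shows "distr M borel (\<lambda>s. phi c (\<eta> s)) = distr M borel \<eta>"
proof -
  interpret prob_space M by (rule P)
  define sg where "sg i = (if c i then -1 else 1 :: real)" for i
  have Xm: "(\<lambda>s. \<eta> s $ i) \<in> borel_measurable M" for i
    using distributed_measurable[OF D[rule_format, of i]] by simp
  have em: "\<eta> \<in> borel_measurable M" by (rule vec_meas[OF Xm])
  have Zc: "phi c (\<eta> s) $ i = sg i * \<eta> s $ i" for s i by (simp add: phi_def sg_def)
  have Zm: "(\<lambda>s. phi c (\<eta> s)) \<in> borel_measurable M"
    by (rule vec_meas, unfold Zc, intro borel_measurable_times measurable_const Xm) simp
  have indZ: "indep_vars (\<lambda>_. borel) (\<lambda>i s. sg i * \<eta> s $ i) UNIV"
    using indep_vars_compose2[OF ind, of "\<lambda>i x. sg i * x" "\<lambda>_. borel"] by simp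
  have flip: "prob ((\<lambda>s. sg i * \<eta> s $ i) -` A \<inter> space M) = prob ((\<lambda>s. \<eta> s $ i) -` A \<inter> space M)"
    if A: "A \<in> sets borel" for i A
  proof (cases "c i")
    case True
    then have "(\<lambda>s. sg i * \<eta> s $ i) = (\<lambda>s. - \<eta> s $ i)" by (simp add: sg_def)
    then show ?thesis using normal_flip[OF D[rule_format, of i] A]
      by (simp add: emeasure_eq_measure)
  next
    case False
    then show ?thesis by (simp add: sg_def)
  qed
  have eqE: "emeasure (distr M borel (\<lambda>s. phi c (\<eta> s))) X = emeasure (distr M borel \<eta>) X"
    if X: "X \<in> gen" for X
  proof -
    obtain A where XA: "X = {y. \<forall>i. y $ i \<in> A i}" and A: "\<forall>i. A i \<in> sets borel"
      using X unfolding gen_def by blast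
    have Xs: "X \<in> sets borel" by (rule gen_sets[OF X])
    have e1: "(\<lambda>s. phi c (\<eta> s)) -` X \<inter> space M = (\<Inter>i\<in>UNIV. (\<lambda>s. sg i * \<eta> s $ i) -` A i \<inter> space M)"
      unfolding XA by (auto simp: Zc)
    have e2: "\<eta> -` X \<inter> space M = (\<Inter>i\<in>UNIV. (\<lambda>s. \<eta> s $ i) -` A i \<inter> space M)"
      unfolding XA by auto
    have "emeasure (distr M borel (\<lambda>s. phi c (\<eta> s))) X = emeasure M ((\<lambda>s. phi c (\<eta> s)) -` X \<inter> space M)"
      by (rule emeasure_distr[OF Zm Xs])
    also have "\<dots> = ennreal (\<Prod>i\<in>UNIV. prob ((\<lambda>s. sg i * \<eta> s $ i) -` A i \<inter> space M))"
      unfolding e1 emeasure_eq_measure using indep_varsD_finite[OF indZ, of A] A by simp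
    also have "\<dots> = ennreal (\<Prod>i\<in>UNIV. prob ((\<lambda>s. \<eta> s $ i) -` A i \<inter> space M))"
      using flip A by simp
    also have "\<dots> = emeasure M (\<eta> -` X \<inter> space M)"
      unfolding e2 emeasure_eq_measure using indep_varsD_finite[OF ind, of A] A by simp
    also have "\<dots> = emeasure (distr M borel \<eta>) X"
      by (rule emeasure_distr[OF em Xs, symmetric])
    finally show ?thesis .
  qed
  show ?thesis
  proof (rule measure_eqI_generator_eq[OF gen_Int_stable _ eqE _ _, of UNIV "\<lambda>_. UNIV"])
    show "gen \<subseteq> Pow UNIV" by simp
    show "sets (distr M borel (\<lambda>s. phi c (\<eta> s))) = sigma_sets UNIV gen" by (simp add: gen_sigma)
    show "sets (distr M borel \<eta>) = sigma_sets UNIV gen" by (simp add: gen_sigma)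
    show "range (\<lambda>_. UNIV) \<subseteq> gen" unfolding gen_def by auto
    show "(\<Union>i::nat. UNIV) = (UNIV :: (real^'n) set)" by simp
    show "emeasure (distr M borel (\<lambda>s. phi c (\<eta> s))) UNIV \<noteq> \<infinity>" for i :: nat
      using emeasure_distr[OF Zm, of UNIV] by (simp add: emeasure_eq_measure)
  qed
qed


theorem theorem3:
  fixes H :: "'m::finite \<Rightarrow> 'n::finite \<Rightarrow> bool"
    and c :: "'n \<Rightarrow> bool" and w t :: "real^'n"
  assumes "codeword H c"
    and "LP_pseudocodeword H w"
    and "t \<in> recovery_cone H w"
  shows "phi c t \<in> recovery_cone H (relative_point c w) \<and>
    (\<forall>(M :: 'a measure) (\<eta> :: 'a \<Rightarrow> real^'n) (\<sigma>::real).
       \<sigma> > 0 \<and> prob_space M \<and>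
       prob_space.indep_vars M (\<lambda>_. borel) (\<lambda>i s. \<eta> s $ i) UNIV \<and>
       (\<forall>i. distributed M lborel (\<lambda>s. \<eta> s $ i) (\<lambda>x. ennreal (normal_density 0 \<sigma> x)))
       \<longrightarrow> measure M {s \<in> space M. unique_opt H (t + \<eta> s) w}
         = measure M {s \<in> space M. unique_opt H (phi c t + \<eta> s) (relative_point c w)})"
proof -
  have w: "w \<in> fund_polytope H"
    using assms(2) unfolding LP_pseudocodeword_def extreme_point_of_def by blast
  have p1: "phi c t \<in> recovery_cone H (relative_point c w)"
    by (rule part1[OF assms(1) w assms(3)])
  have p2: "measure M {s \<in> space M. unique_opt H (t + \<eta> s) w}
         = measure M {s \<in> space M. unique_opt H (phi c t + \<eta> s) (relative_point c w)}"
    if hyp: "\<sigma> > 0 \<and> prob_space M \<and>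
       prob_space.indep_vars M (\<lambda>_. borel) (\<lambda>i s. \<eta> s $ i) UNIV \<and>
       (\<forall>i. distributed M lborel (\<lambda>s. \<eta> s $ i) (\<lambda>x. ennreal (normal_density 0 \<sigma> x)))"
    for M :: "'a measure" and \<eta> :: "'a \<Rightarrow> real^'n" and \<sigma> :: real
  proof -
    have P: "prob_space M" and ind: "prob_space.indep_vars M (\<lambda>_. borel) (\<lambda>i s. \<eta> s $ i) UNIV"
      and D: "\<forall>i. distributed M lborel (\<lambda>s. \<eta> s $ i) (\<lambda>x. ennreal (normal_density 0 \<sigma> x))"
      using hyp by auto
    have Xm: "(\<lambda>s. \<eta> s $ i) \<in> borel_measurable M" for i
      using distributed_measurable[OF D[rule_format, of i]] by simp
    have em: "\<eta> \<in> borel_measurable M" by (rule vec_meas[OF Xm])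
    have Zm: "(\<lambda>s. phi c (\<eta> s)) \<in> borel_measurable M"
      by (rule vec_meas, unfold phi_def vec_lambda_beta,
          intro borel_measurable_times measurable_const Xm) simp
    define B where "B = {y. unique_opt H (phi c t + y) (relative_point c w)}"
    have Bs: "B \<in> sets borel" unfolding B_def by (rule borel_open[OF open_uo])
    have e1: "{s \<in> space M. unique_opt H (t + \<eta> s) w} = (\<lambda>s. phi c (\<eta> s)) -` B \<inter> space M"
      unfolding B_def using uo_equiv[OF assms(1) w] by (auto simp: phi_add)
    have e2: "{s \<in> space M. unique_opt H (phi c t + \<eta> s) (relative_point c w)} = \<eta> -` B \<inter> space M"
      unfolding B_def by auto
    have "measure M ((\<lambda>s. phi c (\<eta> s)) -` B \<inter> space M) = measure (distr M borel (\<lambda>s. phi c (\<eta> s))) B"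
      by (rule measure_distr[OF Zm Bs, symmetric])
    also have "\<dots> = measure (distr M borel \<eta>) B"
      by (simp add: distr_flip[OF P ind D])
    also have "\<dots> = measure M (\<eta> -` B \<inter> space M)"
      by (rule measure_distr[OF em Bs])
    finally show ?thesis unfolding e1 e2 .
  qed
  show ?thesis using p1 p2 by blast
qed

end
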